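(* Let $D$ be a locatable digraph of order $n$ with $\gamma_{OL}(D)=n$. Let $x$ be an arbitrary vertex of $D$ and let $D'$ be the digraph obtained from $D$ by deleting all non-forcing arcs of $D$ whose tail is $x$. Then $D'$ is locatable and $\gamma_{OL}(D')=n$. Moreover, if $x$ is not location-forced in $D$, then $D$ and $D'$ have the same sets of forcing arcs.
   Context: Digraphs are finite and may contain loops; between two distinct vertices there may be arcs in one or both directions, no repeated arcs. $N^-(v)=\{u: uv\text{ is an arc}\}$ (contains $v$ iff $v$ has a loop). An OLD set of $D$ is a set $S\subseteq V(D)$ such that every vertex has an in-neighbour in $S$ and for every two distinct vertices $u,w$ some vertex of $S$ lies in exactly one of $N^-(u),N^-(w)$. $D$ is locatable if it has an OLD set, and then $\gamma_{OL}(D)$ is the minimum size of an OLD set. A vertex $v$ is location-forced if there are distinct vertices $y,z$ with $N^-(y)\ominus N^-(z)=\{v\}$ ($\ominus$ = symmetric difference). An arc $uy$ (possibly a loop) of a locatable digraph is a forcing arc if either $N^-(y)=\{u\}$, or there is a vertex $z$ with $N^-(z)=N^-(y)\setminus\{u\}$. *)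

theory Defs
  imports Main
begin

text \<open>A digraph is a finite vertex set V together with an arc set A \<subseteq> V \<times> V
  (loops allowed; (u,v) \<in> A means the arc uv from u to v).\<close>

definition digraph :: "'a set \<Rightarrow> ('a \<times> 'a) set \<Rightarrow> bool" where
  "digraph V A \<longleftrightarrow> finite V \<and> A \<subseteq> V \<times> V"

definition in_nbhd :: "'a set \<Rightarrow> ('a \<times> 'a) set \<Rightarrow> 'a \<Rightarrow> 'a set" where
  "in_nbhd V A v = {u \<in> V. (u, v) \<in> A}"

definition symdiff :: "'a set \<Rightarrow> 'a set \<Rightarrow> 'a set" where
  "symdiff X Y = (X - Y) \<union> (Y - X)"

definition is_OLD :: "'a set \<Rightarrow> ('a \<times> 'a) set \<Rightarrow> 'a set \<Rightarrow> bool" where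
  "is_OLD V A S \<longleftrightarrow> S \<subseteq> V
     \<and> (\<forall>v\<in>V. \<exists>u\<in>S. u \<in> in_nbhd V A v)
     \<and> (\<forall>u\<in>V. \<forall>w\<in>V. u \<noteq> w \<longrightarrow> (\<exists>s\<in>S. s \<in> symdiff (in_nbhd V A u) (in_nbhd V A w)))"

definition locatable :: "'a set \<Rightarrow> ('a \<times> 'a) set \<Rightarrow> bool" where
  "locatable V A \<longleftrightarrow> (\<exists>S. is_OLD V A S)"

definition gamma_OL :: "'a set \<Rightarrow> ('a \<times> 'a) set \<Rightarrow> nat" where
  "gamma_OL V A = (LEAST k. \<exists>S. is_OLD V A S \<and> card S = k)"

definition location_forced :: "'a set \<Rightarrow> ('a \<times> 'a) set \<Rightarrow> 'a \<Rightarrow> bool" where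
  "location_forced V A v \<longleftrightarrow>
     (\<exists>y\<in>V. \<exists>z\<in>V. y \<noteq> z \<and> symdiff (in_nbhd V A y) (in_nbhd V A z) = {v})"

definition forcing_arc :: "'a set \<Rightarrow> ('a \<times> 'a) set \<Rightarrow> 'a \<Rightarrow> 'a \<Rightarrow> bool" where
  "forcing_arc V A u y \<longleftrightarrow> (u, y) \<in> A \<and>
     (in_nbhd V A y = {u} \<or> (\<exists>z\<in>V. in_nbhd V A z = in_nbhd V A y - {u}))"

definition forcing_arcs :: "'a set \<Rightarrow> ('a \<times> 'a) set \<Rightarrow> ('a \<times> 'a) set" where
  "forcing_arcs V A = {(u, y). forcing_arc V A u y}"

definition delete_nonforcing_out :: "'a set \<Rightarrow> ('a \<times> 'a) set \<Rightarrow> 'a \<Rightarrow> ('a \<times> 'a) set" where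
  "delete_nonforcing_out V A x = A - {(u, y). u = x \<and> (u, y) \<in> A \<and> \<not> forcing_arc V A u y}"

end

theory Submission
  imports Defs
begin


definition edge :: "'a set set \<Rightarrow> 'a \<Rightarrow> 'a set \<Rightarrow> bool" where
  "edge G l X \<longleftrightarrow> X \<in> G \<and> l \<in> X \<and> X - {l} \<in> G"

lemma contract1:
  assumes "finite G" "edge G l X"
  shows "card ((\<lambda>Y. Y - {l}) ` G) + 1 \<le> card G"
proof -
  have e: "X \<in> G" "X - {l} \<in> G" "l \<in> X" using assms(2) unfolding edge_def by auto
  have "(\<lambda>Y. Y - {l}) ` G = (\<lambda>Y. Y - {l}) ` (G - {X})"
  proof
    show "(\<lambda>Y. Y - {l}) ` G \<subseteq> (\<lambda>Y. Y - {l}) ` (G - {X})"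
    proof
      fix Z assume "Z \<in> (\<lambda>Y. Y - {l}) ` G"
      then obtain Y where Y: "Y \<in> G" "Z = Y - {l}" by auto
      show "Z \<in> (\<lambda>Y. Y - {l}) ` (G - {X})"
      proof (cases "Y = X")
        case True
        then have "Z = (X - {l}) - {l}" using Y by auto
        moreover have "X - {l} \<in> G - {X}" using e by auto
        ultimately show ?thesis by blast
      next
        case False then show ?thesis using Y by blast
      qed
    qed
  qed (rule image_mono, blast)
  then have "card ((\<lambda>Y. Y - {l}) ` G) \<le> card (G - {X})"
    by (metis card_image_le finite_Diff assms(1))
  moreover have "card (G - {X}) = card G - 1" using e assms(1) by simp
  moreover have "card G \<ge> 1" using e assms(1)
    by (metis card_0_eq empty_iff less_one linorder_not_le)
  ultimately show ?thesis by linarith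
qed

lemma contract2:
  assumes "finite G" "edge G l X" "edge G l Y" "X \<noteq> Y"
  shows "card ((\<lambda>Y. Y - {l}) ` G) + 2 \<le> card G"
proof -
  have e: "X \<in> G" "X - {l} \<in> G" "l \<in> X" "Y \<in> G" "Y - {l} \<in> G" "l \<in> Y"
    using assms(2,3) unfolding edge_def by auto
  have "(\<lambda>Y. Y - {l}) ` G = (\<lambda>Y. Y - {l}) ` (G - {X, Y})"
  proof
    show "(\<lambda>Y. Y - {l}) ` G \<subseteq> (\<lambda>Y. Y - {l}) ` (G - {X, Y})"
    proof
      fix Z assume "Z \<in> (\<lambda>Y. Y - {l}) ` G"
      then obtain W where W: "W \<in> G" "Z = W - {l}" by auto
      show "Z \<in> (\<lambda>Y. Y - {l}) ` (G - {X, Y})"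
      proof (cases "W = X \<or> W = Y")
        case True
        then have "Z = (W - {l}) - {l}" using W by auto
        moreover have "W - {l} \<in> G - {X, Y}" using e True by auto
        ultimately show ?thesis by blast
      next
        case False then show ?thesis using W by blast
      qed
    qed
  qed (rule image_mono, blast)
  then have "card ((\<lambda>Y. Y - {l}) ` G) \<le> card (G - {X, Y})"
    by (metis card_image_le finite_Diff assms(1))
  moreover have "card (G - {X, Y}) = card G - 2"
  proof -
    have "{X, Y} \<subseteq> G" using e by auto
    then have "card (G - {X, Y}) = card G - card {X, Y}" by (metis card_Diff_subset finite.emptyI finite.insertI)
    then show ?thesis using assms(4) by simp
  qed
  moreover have "card G \<ge> 2"
  proof -
    have "{X, Y} \<subseteq> G" using e by auto
    then have "card {X, Y} \<le> card G" using assms(1) by (rule card_mono[rotated])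
    then show ?thesis using assms(4) by simp
  qed
  ultimately show ?thesis by linarith
qed

lemma edge_rm:
  assumes "edge G m X" "m \<noteq> l"
  shows "edge ((\<lambda>Y. Y - {l}) ` G) m (X - {l})"
proof -
  have e: "X \<in> G" "X - {m} \<in> G" "m \<in> X" using assms(1) unfolding edge_def by auto
  have "X - {l} - {m} = (X - {m}) - {l}" by auto
  then show ?thesis unfolding edge_def using e assms(2) by auto
qed

lemma lowerB:
  "finite L \<Longrightarrow> finite G \<Longrightarrow> G \<noteq> {} \<Longrightarrow> \<forall>m\<in>L. \<exists>X. edge G m X \<Longrightarrow> card L + 1 \<le> card G"
proof (induction L arbitrary: G rule: finite_induct)
  case empty
  then have "card G > 0" by (simp add: card_gt_0_iff)
  then show ?case by simp
next
  case (insert l L)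
  let ?G = "(\<lambda>Y. Y - {l}) ` G"
  have h: "\<forall>m\<in>L. \<exists>X. edge ?G m X"
  proof
    fix m assume m: "m \<in> L"
    then have ml: "m \<noteq> l" using insert.hyps(2) by auto
    from m insert.prems(3) obtain X where "edge G m X" by auto
    then have "edge ?G m (X - {l})" using edge_rm[OF _ ml] by blast
    then show "\<exists>X. edge ?G m X" by blast
  qed
  have f: "finite ?G" using insert.prems(1) by simp
  have n: "?G \<noteq> {}" using insert.prems(2) by simp
  have c: "card L + 1 \<le> card ?G" using insert.IH[OF f n h] .
  obtain X where "edge G l X" using insert.prems(3) by auto
  then have "card ?G + 1 \<le> card G" using contract1[OF insert.prems(1)] by blast
  moreover have "card (insert l L) = card L + 1" using insert.hyps(1,2) by simp
  ultimately show ?case using c by linarith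
qed

definition flip :: "'a \<Rightarrow> 'a set \<Rightarrow> 'a set" where
  "flip l C = (if l \<in> C then C - {l} else insert l C)"

lemma flip_flip: "flip l (flip l C) = C"
  unfolding flip_def by auto

lemma flip_comm: "flip a (flip b C) = flip b (flip a C)"
  unfolding flip_def by auto

lemma rm_flip: "l \<in> X \<Longrightarrow> X - {l} = flip l X"
  unfolding flip_def by auto

lemma flip_mem: "l \<in> flip l X \<longleftrightarrow> l \<notin> X"
  unfolding flip_def by auto

lemma flip_mem2: "m \<noteq> l \<Longrightarrow> m \<in> flip l X \<longleftrightarrow> m \<in> X"
  unfolding flip_def by auto

lemma flip_rm: "flip l X - {l} = X - {l}"
  unfolding flip_def by auto

lemma eq_rm:
  assumes e: "X - {a} = Y - {a}"
  shows "X = Y \<or> X = flip a Y"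
proof -
  have h: "\<And>z. z \<noteq> a \<Longrightarrow> z \<in> X \<longleftrightarrow> z \<in> Y"
  proof -
    fix z assume "z \<noteq> a"
    have "z \<in> X - {a} \<longleftrightarrow> z \<in> Y - {a}" using e by simp
    then show "z \<in> X \<longleftrightarrow> z \<in> Y" using \<open>z \<noteq> a\<close> by simp
  qed
  show ?thesis
  proof (cases "a \<in> X \<longleftrightarrow> a \<in> Y")
    case True
    have "X = Y"
    proof (rule set_eqI)
      fix z show "z \<in> X \<longleftrightarrow> z \<in> Y" using h[of z] True by (cases "z = a") auto
    qed
    then show ?thesis by simp
  next
    case False
    have "X = flip a Y"
    proof (rule set_eqI)
      fix z show "z \<in> X \<longleftrightarrow> z \<in> flip a Y"
        using h[of z] False flip_mem[of a Y] flip_mem2[of z a Y] by (cases "z = a") auto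
    qed
    then show ?thesis by simp
  qed
qed

lemma key:
  assumes "finite L" "finite G" "card G = card L + 1" "\<forall>m\<in>L. \<exists>X. edge G m X"
    and "a \<in> L" "b \<in> L" "a \<noteq> b" "C \<in> G" "flip a (flip b C) \<in> G"
    and nfa: "flip a C \<notin> G" and nfb: "flip b C \<notin> G"
  shows False
proof -
  define C' where "C' = flip a (flip b C)"
  have C'G: "C' \<in> G" using assms(9) C'_def by simp
  let ?G1 = "(\<lambda>Y. Y - {a}) ` G"
  let ?G2 = "(\<lambda>Y. Y - {b}) ` ?G1"
  obtain Xa where Xa: "edge G a Xa" using assms(4,5) by blast
  have c1: "card ?G1 + 1 \<le> card G" using contract1[OF assms(2) Xa] .
  obtain Xb where Xb: "edge G b Xb" using assms(4,6) by blast
  have ba: "b \<noteq> a" using assms(7) by simp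
  have E2: "edge ?G1 b (Xb - {a})" using edge_rm[OF Xb ba] .
  have bC': "b \<in> C' \<longleftrightarrow> b \<notin> C" using C'_def flip_mem2[of b a] flip_mem[of b] assms(7) by simp
  define Xc where "Xc = (if b \<in> C then C - {a} else C' - {a})"
  have E1: "edge ?G1 b Xc"
  proof (cases "b \<in> C")
    case True
    have "C - {a} - {b} = C' - {a}"
    proof -
      have "C' - {a} = flip b C - {a}" unfolding C'_def by (rule flip_rm)
      also have "\<dots> = C - {b} - {a}" using rm_flip[OF True] by simp
      finally show ?thesis by blast
    qed
    moreover have "C - {a} \<in> ?G1" "C' - {a} \<in> ?G1" using assms(8) C'G by auto
    moreover have "b \<in> C - {a}" using True assms(7) by simp
    ultimately show ?thesis unfolding edge_def Xc_def using True by simp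
  next
    case False
    have "C' - {a} - {b} = C - {a}"
    proof -
      have "C' - {a} = flip b C - {a}" unfolding C'_def by (rule flip_rm)
      also have "\<dots> = insert b C - {a}" using False unfolding flip_def by simp
      finally show ?thesis using False assms(7) by blast
    qed
    moreover have "C - {a} \<in> ?G1" "C' - {a} \<in> ?G1" using assms(8) C'G by auto
    moreover have "b \<in> C' - {a}" using False bC' assms(7) by simp
    ultimately show ?thesis unfolding edge_def Xc_def using False by simp
  qed
  have ne: "Xc \<noteq> Xb - {a}"
  proof
    assume eq: "Xc = Xb - {a}"
    have xb: "Xb \<in> G" "b \<in> Xb" "Xb - {b} \<in> G" using Xb unfolding edge_def by auto
    show False
    proof (cases "b \<in> C")
      case True
      then have "Xb - {a} = C - {a}" using eq Xc_def by simp
      then have "Xb = C \<or> Xb = flip a C" by (rule eq_rm)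
      then show False
      proof
        assume "Xb = C"
        then have "Xb - {b} = flip b C" using rm_flip[OF True] by simp
        then show False using xb nfb by simp
      next
        assume "Xb = flip a C" then show False using xb nfa by simp
      qed
    next
      case False
      then have "Xb - {a} = C' - {a}" using eq Xc_def by simp
      then have "Xb = C' \<or> Xb = flip a C'" by (rule eq_rm)
      then show False
      proof
        assume "Xb = C'"
        then have "Xb - {b} = flip b C'" using rm_flip[of b C'] bC' False by simp
        also have "\<dots> = flip a C" unfolding C'_def by (simp add: flip_comm flip_flip)
        finally show False using xb nfa by simp
      next
        assume "Xb = flip a C'"
        then have "Xb = flip b C" unfolding C'_def by (simp add: flip_flip)
        then show False using xb nfb by simp
      qed
    qed
  qed
  have fin1: "finite ?G1" using assms(2) by simp
  have c2: "card ?G2 + 2 \<le> card ?G1" using contract2[OF fin1 E1 E2 ne] .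
  have hh: "\<forall>m\<in>L - {a, b}. \<exists>X. edge ?G2 m X"
  proof
    fix m assume m: "m \<in> L - {a, b}"
    then obtain X where "edge G m X" using assms(4) by blast
    then have "edge ?G1 m (X - {a})" using edge_rm[of G m X a] m by blast
    then have "edge ?G2 m (X - {a} - {b})" using edge_rm[of ?G1 m "X - {a}" b] m by blast
    then show "\<exists>X. edge ?G2 m X" by blast
  qed
  have n2: "?G2 \<noteq> {}" using assms(8) by blast
  have f2: "finite (L - {a, b})" "finite ?G2" using assms(1,2) by auto
  have "card (L - {a, b}) + 1 \<le> card ?G2" using lowerB[OF f2 n2 hh] .
  moreover have "card (L - {a, b}) = card L - 2"
  proof -
    have "{a, b} \<subseteq> L" using assms(5,6) by auto
    then have "card (L - {a, b}) = card L - card {a, b}" by (metis card_Diff_subset finite.emptyI finite.insertI)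
    then show ?thesis using assms(7) by simp
  qed
  moreover have "card L \<ge> 2"
  proof -
    have "{a, b} \<subseteq> L" using assms(5,6) by auto
    then have "card {a, b} \<le> card L" using assms(1) by (rule card_mono[rotated])
    then show ?thesis using assms(7) by simp
  qed
  ultimately show False using c1 c2 assms(3) by linarith
qed



definition fa :: "'a set \<Rightarrow> ('a \<Rightarrow> 'a set) \<Rightarrow> 'a \<Rightarrow> 'a \<Rightarrow> bool" where
  "fa V N u y \<longleftrightarrow> u \<in> N y \<and> (N y = {u} \<or> (\<exists>z\<in>V. N z = N y - {u}))"

lemma flip_notin: "l \<notin> X \<Longrightarrow> flip l X = insert l X"
  unfolding flip_def by simp

lemma keyN:
  assumes "finite V" "inj_on N V" "\<forall>v\<in>V. N v \<noteq> {}" "\<forall>v\<in>V. \<exists>y\<in>V. fa V N v y"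
    "a \<in> V" "b \<in> V" "a \<noteq> b" "y \<in> V" "z \<in> V" "N z = flip a (flip b (N y))"
    "flip a (N y) \<notin> insert {} (N ` V)" "flip b (N y) \<notin> insert {} (N ` V)"
  shows False
proof -
  let ?G = "insert {} (N ` V)"
  have "{} \<notin> N ` V" using assms(3) by auto
  then have cG: "card ?G = card V + 1" using assms(1,2) by (simp add: card_image)
  have fG: "finite ?G" using assms(1) by simp
  have E: "\<forall>m\<in>V. \<exists>X. edge ?G m X"
  proof
    fix m assume "m \<in> V"
    then obtain y where y: "y \<in> V" "fa V N m y" using assms(4) by blast
    have my: "m \<in> N y" using y(2) unfolding fa_def by blast
    have "N y - {m} \<in> ?G"
    proof (cases "N y = {m}")
      case True then show ?thesis by simp
    next
      case False
      then obtain z where "z \<in> V" "N z = N y - {m}" using y(2) unfolding fa_def by blast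
      then show ?thesis by blast
    qed
    then have "edge ?G m (N y)" using y(1) my unfolding edge_def by blast
    then show "\<exists>X. edge ?G m X" by blast
  qed
  have "N y \<in> ?G" "N z \<in> ?G" using assms(8,9) by auto
  then show False using key[OF assms(1) fG cG E assms(5,6,7)] assms(10,11,12) by metis
qed

lemma part1:
  assumes fin: "finite V" and inj: "inj_on N V" and ne: "\<forall>v\<in>V. N v \<noteq> {}"
    and fo: "\<forall>v\<in>V. \<exists>y\<in>V. fa V N v y" and xV: "x \<in> V"
    and N'def: "\<And>y. N' y = (if fa V N x y then N y else N y - {x})"
  shows "inj_on N' V" "\<forall>v\<in>V. N' v \<noteq> {}" "\<forall>v\<in>V. \<exists>y\<in>V. fa V N' v y"
proof -
  have sub: "\<And>y. N' y \<subseteq> N y" using N'def by auto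
  have P1: "\<And>y. fa V N x y \<Longrightarrow> N' y = N y" using N'def by auto
  have P2: "\<And>y. \<not> fa V N x y \<Longrightarrow> N' y = N y - {x}" using N'def by auto
  have P3: "\<And>y. x \<notin> N y \<Longrightarrow> N' y = N y" using N'def by auto
  have aux: False if "y \<in> V" "z \<in> V" "N y - {x} = N z - {x}" "x \<in> N y" "x \<notin> N z" "N' y = N' z" for y z
  proof -
    have "N z = N y - {x}" using that by blast
    then have "fa V N x y" using that unfolding fa_def by blast
    then have "x \<in> N' y" using P1 that by auto
    then show False using sub that by auto
  qed
  show "inj_on N' V"
  proof (rule inj_onI)
    fix y z assume yz: "y \<in> V" "z \<in> V" "N' y = N' z"
    have e: "N y - {x} = N z - {x}"
      using yz(3) N'def[of y] N'def[of z] by (auto split: if_splits)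
    show "y = z"
    proof (rule ccontr)
      assume "y \<noteq> z"
      then have "N y \<noteq> N z" using inj yz unfolding inj_on_def by blast
      then have "(x \<in> N y \<and> x \<notin> N z) \<or> (x \<in> N z \<and> x \<notin> N y)" using e by blast
      then show False using aux[of y z] aux[of z y] yz e by metis
    qed
  qed
  show ne': "\<forall>v\<in>V. N' v \<noteq> {}"
  proof
    fix v assume v: "v \<in> V"
    show "N' v \<noteq> {}"
    proof (cases "fa V N x v")
      case True then show ?thesis using P1 ne v by auto
    next
      case False
      have "N v \<noteq> {x}"
      proof
        assume "N v = {x}" then have "fa V N x v" unfolding fa_def by auto
        then show False using False by simp
      qed
      then show ?thesis using P2[OF False] ne v by auto
    qed
  qed
  show "\<forall>v\<in>V. \<exists>y\<in>V. fa V N' v y"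
  proof
    fix v assume v: "v \<in> V"
    then obtain y where y: "y \<in> V" "fa V N v y" using fo by auto
    have vy: "v \<in> N y" using y unfolding fa_def by auto
    show "\<exists>y\<in>V. fa V N' v y"
    proof (cases "N y = {v}")
      case True
      then have "N' y = {v}" using sub[of y] ne'[rule_format, OF y(1)] by auto
      then show ?thesis using y(1) unfolding fa_def by auto
    next
      case False
      then obtain z where z: "z \<in> V" "N z = N y - {v}" using y unfolding fa_def by auto
      show ?thesis
      proof (cases "v = x")
        case True
        then have "N' y = N y" using P1 y by auto
        moreover have "N' z = N z" using P3 z True by auto
        ultimately have "fa V N' v y" using z vy unfolding fa_def by auto
        then show ?thesis using y(1) by blast
      next
        case vx: False
        have vy': "v \<in> N' y" using vy vx N'def[of y] by auto
        show ?thesis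
        proof (cases "fa V N x y = fa V N x z")
          case True
          then have "N' z = N' y - {v}" using N'def[of y] N'def[of z] z by auto
          then have "fa V N' v y" using vy' z unfolding fa_def by auto
          then show ?thesis using y(1) by blast
        next
          case False
          then consider "fa V N x y" "\<not> fa V N x z" | "\<not> fa V N x y" "fa V N x z" by blast
          then show ?thesis
          proof cases
            case 1
            show ?thesis
            proof (cases "x \<in> N y")
              case False
              then have "N' y = N y" "N' z = N z" using P3 z by auto
              then have "fa V N' v y" using z vy unfolding fa_def by auto
              then show ?thesis using y(1) by blast
            next
              case True
              have "N y \<noteq> {x}" using vy vx by auto
              then obtain w where w: "w \<in> V" "N w = N y - {x}" using 1 unfolding fa_def by auto
              have "N' w = N w" using P3 w by auto
              moreover have "N' z = N z - {x}" using P2 1 by auto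
              ultimately have "N' z = N' w - {v}" "v \<in> N' w" using w z vy vx by auto
              then have "fa V N' v w" using z unfolding fa_def by auto
              then show ?thesis using w(1) by blast
            qed
          next
            case 2
            show ?thesis
            proof (cases "x \<in> N z")
              case False
              then have "x \<notin> N y" using z vx by auto
              then have "N' y = N y" "N' z = N z" using P3 z False by auto
              then have "fa V N' v y" using z vy unfolding fa_def by auto
              then show ?thesis using y(1) by blast
            next
              case True
              have N'y: "N' y = N y - {x}" using P2 2 by auto
              show ?thesis
              proof (cases "N z = {x}")
                case True
                then have "N' y = {v}" using N'y z vy vx by auto
                then have "fa V N' v y" unfolding fa_def by auto
                then show ?thesis using y(1) by blast
              next
                case False
                then obtain w where w: "w \<in> V" "N w = N z - {x}" using 2 unfolding fa_def by auto
                have "N' w = N w" using P3 w by auto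
                then have "N' w = N' y - {v}" using w z N'y by auto
                then have "fa V N' v y" using vy' w unfolding fa_def by auto
                then show ?thesis using y(1) by blast
              qed
            qed
          qed
        qed
      qed
    qed
  qed
qed

lemma part3:
  assumes fin: "finite V" and inj: "inj_on N V" and ne: "\<forall>v\<in>V. N v \<noteq> {}"
    and fo: "\<forall>v\<in>V. \<exists>y\<in>V. fa V N v y" and xV: "x \<in> V"
    and N'def: "\<And>y. N' y = (if fa V N x y then N y else N y - {x})"
    and outside: "\<And>y. y \<notin> V \<Longrightarrow> N y = {}" and subV: "\<And>y. N y \<subseteq> V"
    and nlf: "\<forall>y\<in>V. \<forall>z\<in>V. y \<noteq> z \<longrightarrow> symdiff (N y) (N z) \<noteq> {x}"
  shows "fa V N' u y \<longleftrightarrow> fa V N u y"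
proof -
  have sub: "\<And>y. N' y \<subseteq> N y" using N'def by auto
  have P1: "\<And>y. fa V N x y \<Longrightarrow> N' y = N y" using N'def by auto
  have P2: "\<And>y. \<not> fa V N x y \<Longrightarrow> N' y = N y - {x}" using N'def by auto
  have ne': "\<forall>v\<in>V. N' v \<noteq> {}" using part1(2)[OF fin inj ne fo xV N'def] .
  have inV: "\<And>u y. u \<in> N y \<Longrightarrow> y \<in> V" using outside by blast
  have Lx: "N y = {x}" if fy: "fa V N x y" for y
  proof (rule ccontr)
    assume nx: "N y \<noteq> {x}"
    have xy: "x \<in> N y" using fy unfolding fa_def by blast
    obtain z where z: "z \<in> V" "N z = N y - {x}" using fy nx unfolding fa_def by blast
    have yV: "y \<in> V" using inV[OF xy] .
    have "y \<noteq> z" using z xy by blast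
    moreover have "symdiff (N y) (N z) = {x}" using z xy unfolding symdiff_def by blast
    ultimately show False using nlf yV z(1) by blast
  qed
  obtain w0 where w0: "w0 \<in> V" "fa V N x w0" using fo xV by blast
  have Nw0: "N w0 = {x}" using Lx[OF w0(2)] .
  show ?thesis
  proof
    assume f': "fa V N' u y"
    have uy': "u \<in> N' y" using f' unfolding fa_def by blast
    have uy: "u \<in> N y" using uy' sub by blast
    have yV: "y \<in> V" using inV[OF uy] .
    have uV: "u \<in> V" using uy subV by blast
    show "fa V N u y"
    proof (cases "u = x")
      case True
      have "fa V N x y"
      proof (rule ccontr)
        assume "\<not> fa V N x y"
        then have "N' y = N y - {x}" using P2 by blast
        then show False using uy' True by blast
      qed
      then show ?thesis using True by simp
    next
      case ux: False
      have xu: "x \<noteq> u" using ux by simp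
      have nPy: "\<not> fa V N x y"
      proof
        assume "fa V N x y"
        then have "N y = {x}" using Lx by blast
        then show False using uy ux by blast
      qed
      have N'y: "N' y = N y - {x}" using P2[OF nPy] .
      show ?thesis
      proof (cases "N' y = {u}")
        case True
        then have "N y = {u} \<or> N y = {u, x}" using N'y uy by blast
        then show ?thesis
        proof
          assume "N y = {u}" then show ?thesis unfolding fa_def by simp
        next
          assume "N y = {u, x}"
          then have "N w0 = N y - {u}" using Nw0 ux by blast
          then show ?thesis using uy w0(1) unfolding fa_def by blast
        qed
      next
        case False
        then obtain z where z: "z \<in> V" "N' z = N' y - {u}" using f' unfolding fa_def by blast
        have nPz: "\<not> fa V N x z"
        proof
          assume "fa V N x z"
          then have "N' z = {x}" using P1 Lx by metis
          then have "x \<in> N' y - {u}" using z(2) by simp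
          then show False using N'y by simp
        qed
        have N'z: "N' z = N z - {x}" using P2[OF nPz] .
        have uz: "u \<notin> N z" using z(2) N'z ux by blast
        show ?thesis
        proof (cases "x \<in> N y \<longleftrightarrow> x \<in> N z")
          case True
          have "N z = N y - {u}"
          proof (rule set_eqI)
            fix t
            show "t \<in> N z \<longleftrightarrow> t \<in> N y - {u}"
            proof (cases "t = x")
              case True then show ?thesis using \<open>x \<in> N y \<longleftrightarrow> x \<in> N z\<close> ux by blast
            next
              case False
              have "t \<in> N' z \<longleftrightarrow> t \<in> N' y - {u}" using z(2) by simp
              then show ?thesis using False N'z N'y by blast
            qed
          qed
          then show ?thesis using uy z(1) unfolding fa_def by blast
        next
          case False
          show ?thesis
          proof (rule ccontr)
            assume nf: "\<not> fa V N u y"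
            have nu: "flip u (N y) \<notin> insert {} (N ` V)"
            proof
              assume "flip u (N y) \<in> insert {} (N ` V)"
              then have "N y - {u} \<in> insert {} (N ` V)" using rm_flip[OF uy] by simp
              then have "N y - {u} = {} \<or> (\<exists>w\<in>V. N w = N y - {u})" by blast
              then show False
              proof
                assume "N y - {u} = {}"
                then have "N y = {u}" using uy by blast
                then show False using nf unfolding fa_def by simp
              next
                assume "\<exists>w\<in>V. N w = N y - {u}"
                then show False using nf uy unfolding fa_def by blast
              qed
            qed
            show False
            proof (cases "x \<in> N y")
              case True
              then have xz: "x \<notin> N z" using False by blast
              have eqz: "N z = flip x (flip u (N y))"
              proof -
                have "flip u (N y) = N y - {u}" using rm_flip[OF uy] by simp
                moreover have "x \<in> N y - {u}" using True ux by blast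
                ultimately have "flip x (flip u (N y)) = N y - {u} - {x}" using rm_flip by metis
                moreover have "N z = N y - {u} - {x}"
                proof (rule set_eqI)
                  fix t
                  show "t \<in> N z \<longleftrightarrow> t \<in> N y - {u} - {x}"
                  proof (cases "t = x")
                    case True then show ?thesis using xz by blast
                  next
                    case False
                    have "t \<in> N' z \<longleftrightarrow> t \<in> N' y - {u}" using z(2) by simp
                    then show ?thesis using False N'z N'y by blast
                  qed
                qed
                ultimately show ?thesis by simp
              qed
              have nx: "flip x (N y) \<notin> insert {} (N ` V)"
              proof
                assume "flip x (N y) \<in> insert {} (N ` V)"
                then have h: "N y - {x} \<in> insert {} (N ` V)" using rm_flip[OF True] by simp
                have "N y - {x} \<noteq> {}" using uy ux by blast
                then obtain w where "w \<in> V" "N w = N y - {x}" using h by blast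
                then have "fa V N x y" using True unfolding fa_def by blast
                then show False using nPy by simp
              qed
              show False using keyN[OF fin inj ne fo xV uV xu yV z(1) eqz nx nu] .
            next
              case nxy: False
              then have xz: "x \<in> N z" using False by blast
              have eqz: "N z = flip x (flip u (N y))"
              proof -
                have "flip u (N y) = N y - {u}" using rm_flip[OF uy] by simp
                moreover have "x \<notin> N y - {u}" using nxy by blast
                then have "flip x (N y - {u}) = insert x (N y - {u})" by (rule flip_notin)
                ultimately have "flip x (flip u (N y)) = insert x (N y - {u})" by simp
                moreover have "N z = insert x (N y - {u})"
                proof (rule set_eqI)
                  fix t
                  show "t \<in> N z \<longleftrightarrow> t \<in> insert x (N y - {u})"
                  proof (cases "t = x")
                    case True then show ?thesis using xz by blast
                  next
                    case False
                    have "t \<in> N' z \<longleftrightarrow> t \<in> N' y - {u}" using z(2) by simp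
                    then show ?thesis using False N'z N'y by blast
                  qed
                qed
                ultimately show ?thesis by simp
              qed
              have nx: "flip x (N y) \<notin> insert {} (N ` V)"
              proof
                assume "flip x (N y) \<in> insert {} (N ` V)"
                then have h: "insert x (N y) \<in> insert {} (N ` V)" using nxy unfolding flip_def by simp
                then obtain w where w: "w \<in> V" "N w = insert x (N y)" by blast
                have "N w - {x} = N y" using w(2) nxy by blast
                then have "fa V N x w" using w(2) yV unfolding fa_def by blast
                then have "N w = {x}" using Lx by blast
                then show False using w(2) uy ux by blast
              qed
              show False using keyN[OF fin inj ne fo xV uV xu yV z(1) eqz nx nu] .
            qed
          qed
        qed
      qed
    qed
  next
    assume f: "fa V N u y"
    have uy: "u \<in> N y" using f unfolding fa_def by blast
    have yV: "y \<in> V" using inV[OF uy] .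
    show "fa V N' u y"
    proof (cases "u = x")
      case True
      then have "N' y = N y" using P1 f by blast
      then show ?thesis using f True Lx unfolding fa_def by simp
    next
      case ux: False
      have nPy: "\<not> fa V N x y"
      proof
        assume "fa V N x y"
        then have "N y = {x}" using Lx by blast
        then show False using uy ux by blast
      qed
      have N'y: "N' y = N y - {x}" using P2[OF nPy] .
      have uy': "u \<in> N' y" using uy ux N'y by blast
      show ?thesis
      proof (cases "N y = {u}")
        case True
        then have "N' y = {u}" using N'y ux by blast
        then show ?thesis unfolding fa_def by simp
      next
        case False
        then obtain z where z: "z \<in> V" "N z = N y - {u}" using f unfolding fa_def by blast
        show ?thesis
        proof (cases "fa V N x z")
          case True
          then have "N z = {x}" using Lx by blast
          then have "N' y = {u}" using z(2) N'y uy by blast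
          then show ?thesis unfolding fa_def by simp
        next
          case False
          then have "N' z = N' y - {u}" using P2 z(2) N'y by blast
          then show ?thesis using uy' z(1) unfolding fa_def by blast
        qed
      qed
    qed
  qed
qed



lemma nb_sub: "in_nbhd V A y \<subseteq> V" unfolding in_nbhd_def by blast

lemma nb_out: "digraph V A \<Longrightarrow> y \<notin> V \<Longrightarrow> in_nbhd V A y = {}"
  unfolding in_nbhd_def digraph_def by blast

lemma nb_mem: "digraph V A \<Longrightarrow> u \<in> in_nbhd V A y \<longleftrightarrow> (u, y) \<in> A"
  unfolding in_nbhd_def digraph_def by blast

lemma fa_iff: "digraph V A \<Longrightarrow> forcing_arc V A u y \<longleftrightarrow> fa V (in_nbhd V A) u y"
  unfolding forcing_arc_def fa_def using nb_mem[of V A u y] by simp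

lemma old_V:
  assumes "digraph V A"
  shows "is_OLD V A V \<longleftrightarrow> (\<forall>v\<in>V. in_nbhd V A v \<noteq> {}) \<and> inj_on (in_nbhd V A) V"
proof
  assume o: "is_OLD V A V"
  have "\<forall>v\<in>V. in_nbhd V A v \<noteq> {}" using o unfolding is_OLD_def by blast
  moreover have "inj_on (in_nbhd V A) V"
  proof (rule inj_onI)
    fix u w assume uw: "u \<in> V" "w \<in> V" "in_nbhd V A u = in_nbhd V A w"
    show "u = w"
    proof (rule ccontr)
      assume "u \<noteq> w"
      then obtain s where "s \<in> symdiff (in_nbhd V A u) (in_nbhd V A w)"
        using o uw(1,2) unfolding is_OLD_def by blast
      then show False using uw(3) unfolding symdiff_def by blast
    qed
  qed
  ultimately show "(\<forall>v\<in>V. in_nbhd V A v \<noteq> {}) \<and> inj_on (in_nbhd V A) V" by blast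
next
  assume h: "(\<forall>v\<in>V. in_nbhd V A v \<noteq> {}) \<and> inj_on (in_nbhd V A) V"
  have d: "\<forall>v\<in>V. \<exists>u\<in>V. u \<in> in_nbhd V A v"
  proof
    fix v assume "v \<in> V"
    then obtain u where "u \<in> in_nbhd V A v" using h by blast
    then show "\<exists>u\<in>V. u \<in> in_nbhd V A v" using nb_sub[of V A v] by blast
  qed
  have s: "\<forall>u\<in>V. \<forall>w\<in>V. u \<noteq> w \<longrightarrow> (\<exists>s\<in>V. s \<in> symdiff (in_nbhd V A u) (in_nbhd V A w))"
  proof (intro ballI impI)
    fix u w assume uw: "u \<in> V" "w \<in> V" "u \<noteq> w"
    then have ne: "in_nbhd V A u \<noteq> in_nbhd V A w" using h unfolding inj_on_def by blast
    then obtain s where "s \<in> symdiff (in_nbhd V A u) (in_nbhd V A w)"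
      unfolding symdiff_def by blast
    moreover have "symdiff (in_nbhd V A u) (in_nbhd V A w) \<subseteq> V"
      using nb_sub[of V A u] nb_sub[of V A w] unfolding symdiff_def by blast
    ultimately show "\<exists>s\<in>V. s \<in> symdiff (in_nbhd V A u) (in_nbhd V A w)" by blast
  qed
  show "is_OLD V A V" unfolding is_OLD_def using d s by blast
qed

lemma old_mono:
  assumes "is_OLD V A S" shows "is_OLD V A V"
proof -
  have "S \<subseteq> V" using assms unfolding is_OLD_def by blast
  then show ?thesis using assms unfolding is_OLD_def by blast
qed

lemma char:
  assumes dg: "digraph V A"
  shows "(locatable V A \<and> gamma_OL V A = card V) \<longleftrightarrow>
         (is_OLD V A V \<and> (\<forall>v\<in>V. \<exists>y\<in>V. forcing_arc V A v y))"
proof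
  assume h: "locatable V A \<and> gamma_OL V A = card V"
  then obtain S where "is_OLD V A S" unfolding locatable_def by blast
  then have oV: "is_OLD V A V" by (rule old_mono)
  have fin: "finite V" using dg unfolding digraph_def by blast
  have "\<forall>v\<in>V. \<exists>y\<in>V. forcing_arc V A v y"
  proof (rule ccontr)
    assume "\<not> (\<forall>v\<in>V. \<exists>y\<in>V. forcing_arc V A v y)"
    then obtain v where v: "v \<in> V" "\<forall>y\<in>V. \<not> forcing_arc V A v y" by blast
    have nf: "\<not> forcing_arc V A v y" for y
    proof
      assume f: "forcing_arc V A v y"
      then have "(v, y) \<in> A" unfolding forcing_arc_def by blast
      then have "y \<in> V" using dg unfolding digraph_def by blast
      then show False using v f by blast
    qed
    have dom: "\<forall>w\<in>V. \<exists>u\<in>V - {v}. u \<in> in_nbhd V A w"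
    proof
      fix w assume w: "w \<in> V"
      show "\<exists>u\<in>V - {v}. u \<in> in_nbhd V A w"
      proof (rule ccontr)
        assume nn: "\<not> (\<exists>u\<in>V - {v}. u \<in> in_nbhd V A w)"
        have "in_nbhd V A w \<noteq> {}" using oV w old_V[OF dg] by blast
        moreover have "in_nbhd V A w \<subseteq> {v}" using nn nb_sub[of V A w] by blast
        ultimately have e: "in_nbhd V A w = {v}" by blast
        then have "(v, w) \<in> A" using nb_mem[OF dg] by blast
        then have "forcing_arc V A v w" using e unfolding forcing_arc_def by blast
        then show False using nf by blast
      qed
    qed
    have sep: "\<forall>u\<in>V. \<forall>w\<in>V. u \<noteq> w \<longrightarrow> (\<exists>s\<in>V - {v}. s \<in> symdiff (in_nbhd V A u) (in_nbhd V A w))"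
    proof (intro ballI impI)
      fix u w assume uw: "u \<in> V" "w \<in> V" "u \<noteq> w"
      show "\<exists>s\<in>V - {v}. s \<in> symdiff (in_nbhd V A u) (in_nbhd V A w)"
      proof (rule ccontr)
        assume nn: "\<not> (\<exists>s\<in>V - {v}. s \<in> symdiff (in_nbhd V A u) (in_nbhd V A w))"
        obtain s where s: "s \<in> V" "s \<in> symdiff (in_nbhd V A u) (in_nbhd V A w)"
          using oV uw unfolding is_OLD_def by blast
        have sv: "s = v" using s nn by blast
        have sub: "symdiff (in_nbhd V A u) (in_nbhd V A w) \<subseteq> {v}"
          using nn nb_sub[of V A u] nb_sub[of V A w] unfolding symdiff_def by blast
        show False
        proof (cases "v \<in> in_nbhd V A u")
          case True
          then have vw: "v \<notin> in_nbhd V A w" using s sv unfolding symdiff_def by blast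
          have "in_nbhd V A w = in_nbhd V A u - {v}"
            using sub vw unfolding symdiff_def by blast
          moreover have "(v, u) \<in> A" using True nb_mem[OF dg] by blast
          ultimately have "forcing_arc V A v u" using uw(2) unfolding forcing_arc_def by blast
          then show False using nf by blast
        next
          case False
          then have vw: "v \<in> in_nbhd V A w" using s sv unfolding symdiff_def by blast
          have "in_nbhd V A u = in_nbhd V A w - {v}"
            using sub False unfolding symdiff_def by blast
          moreover have "(v, w) \<in> A" using vw nb_mem[OF dg] by blast
          ultimately have "forcing_arc V A v w" using uw(1) unfolding forcing_arc_def by blast
          then show False using nf by blast
        qed
      qed
    qed
    have "is_OLD V A (V - {v})" unfolding is_OLD_def using dom sep by blast
    then have "gamma_OL V A \<le> card (V - {v})" unfolding gamma_OL_def by (blast intro: Least_le)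
    moreover have "card (V - {v}) < card V" using card_Diff1_less[OF fin v(1)] .
    ultimately show False using h by linarith
  qed
  then show "is_OLD V A V \<and> (\<forall>v\<in>V. \<exists>y\<in>V. forcing_arc V A v y)" using oV by blast
next
  assume h: "is_OLD V A V \<and> (\<forall>v\<in>V. \<exists>y\<in>V. forcing_arc V A v y)"
  have loc: "locatable V A" unfolding locatable_def using h by blast
  have "gamma_OL V A = card V"
    unfolding gamma_OL_def
  proof (rule Least_equality)
    show "\<exists>S. is_OLD V A S \<and> card S = card V" using h by blast
  next
    fix k assume "\<exists>S. is_OLD V A S \<and> card S = k"
    then obtain S where S: "is_OLD V A S" "card S = k" by blast
    have SV: "S \<subseteq> V" using S(1) unfolding is_OLD_def by blast
    have "V \<subseteq> S"
    proof
      fix v assume v: "v \<in> V"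
      show "v \<in> S"
      proof (rule ccontr)
        assume vS: "v \<notin> S"
        obtain y where y: "y \<in> V" "forcing_arc V A v y" using h v by blast
        have vy: "v \<in> in_nbhd V A y" using y(2) nb_mem[OF dg] unfolding forcing_arc_def by blast
        show False
        proof (cases "in_nbhd V A y = {v}")
          case True
          obtain u where u: "u \<in> S" "u \<in> in_nbhd V A y" using S(1) y(1) unfolding is_OLD_def by blast
          then have "u = v" using True by simp
          then show False using u(1) vS by simp
        next
          case False
          then obtain z where z: "z \<in> V" "in_nbhd V A z = in_nbhd V A y - {v}"
            using y(2) unfolding forcing_arc_def by blast
          have "y \<noteq> z" using z(2) vy by blast
          then obtain s where s: "s \<in> S" "s \<in> symdiff (in_nbhd V A y) (in_nbhd V A z)"
            using S(1) y(1) z(1) unfolding is_OLD_def by blast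
          have sd: "symdiff (in_nbhd V A y) (in_nbhd V A z) = {v}"
            using z(2) vy unfolding symdiff_def by blast
          have "s = v" using s(2) sd by simp
          then show False using s(1) vS by simp
        qed
      qed
    qed
    then have "S = V" using SV by blast
    then show "card V \<le> k" using S(2) by simp
  qed
  then show "locatable V A \<and> gamma_OL V A = card V" using loc by blast
qed



theorem lemma10:
  fixes V :: "'a set" and A :: "('a \<times> 'a) set" and x :: 'a
  assumes "digraph V A"
    and "locatable V A"
    and "gamma_OL V A = card V"
    and "x \<in> V"
  shows "locatable V (delete_nonforcing_out V A x)
       \<and> gamma_OL V (delete_nonforcing_out V A x) = card V
       \<and> (\<not> location_forced V A x \<longrightarrow>
            forcing_arcs V (delete_nonforcing_out V A x) = forcing_arcs V A)"
proof -
  define A' where "A' = delete_nonforcing_out V A x"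
  define N where "N = in_nbhd V A"
  define N' where "N' = in_nbhd V A'"
  have dg: "digraph V A" using assms(1) .
  have fin: "finite V" using dg unfolding digraph_def by blast
  have dg': "digraph V A'"
    using dg unfolding digraph_def A'_def delete_nonforcing_out_def by blast
  have c: "is_OLD V A V \<and> (\<forall>v\<in>V. \<exists>y\<in>V. forcing_arc V A v y)"
    using char[OF dg] assms(2,3) by blast
  have ne: "\<forall>v\<in>V. N v \<noteq> {}" and inj: "inj_on N V"
    using c old_V[OF dg] unfolding N_def by blast+
  have fo: "\<forall>v\<in>V. \<exists>y\<in>V. fa V N v y"
    using c fa_iff[OF dg] unfolding N_def by blast
  have N'eq: "N' y = (if fa V N x y then N y else N y - {x})" for y
  proof -
    have "N' y = {u \<in> V. (u, y) \<in> A \<and> (u = x \<longrightarrow> forcing_arc V A x y)}"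
      unfolding N'_def A'_def in_nbhd_def delete_nonforcing_out_def by blast
    also have "\<dots> = {u \<in> V. (u, y) \<in> A \<and> (u = x \<longrightarrow> fa V N x y)}"
      using fa_iff[OF dg, of x y] unfolding N_def by simp
    also have "\<dots> = (if fa V N x y then N y else N y - {x})"
      unfolding N_def in_nbhd_def by auto
    finally show ?thesis .
  qed
  have inj': "inj_on N' V" and ne': "\<forall>v\<in>V. N' v \<noteq> {}" and fo': "\<forall>v\<in>V. \<exists>y\<in>V. fa V N' v y"
    using part1[OF fin inj ne fo assms(4) N'eq] by blast+
  have o': "is_OLD V A' V" using old_V[OF dg'] inj' ne' unfolding N'_def by blast
  have f': "\<forall>v\<in>V. \<exists>y\<in>V. forcing_arc V A' v y" using fo' fa_iff[OF dg'] unfolding N'_def by blast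
  have r12: "locatable V A' \<and> gamma_OL V A' = card V" using char[OF dg'] o' f' by blast
  have r3: "forcing_arcs V A' = forcing_arcs V A" if nlf0: "\<not> location_forced V A x"
  proof -
    have nlf: "\<forall>y\<in>V. \<forall>z\<in>V. y \<noteq> z \<longrightarrow> symdiff (N y) (N z) \<noteq> {x}"
      using nlf0 unfolding location_forced_def N_def by blast
    have out: "\<And>y. y \<notin> V \<Longrightarrow> N y = {}" unfolding N_def using nb_out[OF dg] by blast
    have sV: "\<And>y. N y \<subseteq> V" unfolding N_def by (rule nb_sub)
    have eq: "forcing_arc V A' u y \<longleftrightarrow> forcing_arc V A u y" for u y
    proof -
      have "forcing_arc V A' u y \<longleftrightarrow> fa V N' u y" unfolding N'_def by (rule fa_iff[OF dg'])
      also have "\<dots> \<longleftrightarrow> fa V N u y" by (rule part3[OF fin inj ne fo assms(4) N'eq out sV nlf])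
      also have "\<dots> \<longleftrightarrow> forcing_arc V A u y" unfolding N_def by (rule fa_iff[OF dg, symmetric])
      finally show ?thesis .
    qed
    show ?thesis unfolding forcing_arcs_def
    proof (rule set_eqI)
      fix p :: "'a \<times> 'a"
      obtain u y where p: "p = (u, y)" by (cases p)
      show "p \<in> {(u, y). forcing_arc V A' u y} \<longleftrightarrow> p \<in> {(u, y). forcing_arc V A u y}"
        using eq[of u y] unfolding p by simp
    qed
  qed
  show ?thesis using r12 r3 unfolding A'_def by blast
qed


end
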